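(* Let $(X,S)$ be an aperiodic linearly recurrent subshift with constant $K$ over a finite alphabet $A$, and let $\zeta=\{[a]: a\in A\}$ be the partition into $1$-cylinders. Then for all $x\in X$, $$\frac{1}{K}\leq \underline{\mathcal{R}}_{\zeta}(x)\leq \overline{\mathcal{R}}_{\zeta}(x)\leq K.$$
   Context: $A^{\mathbb Z}$ carries the product topology and the shift $(Sx)_n=x_{n+1}$; a subshift is a closed $S$-invariant $X\subseteq A^{\mathbb Z}$. For $x\in A^{\mathbb Z}$, $L(x)$ is the set of finite words occurring in $x$, and $L(X)=\bigcup_{x\in X}L(x)$. For $u\in L(x)$, a word $w$ is a return word to $u$ (in $x$) if $wu\in L(x)$, $u$ is a prefix of $wu$, and $u$ occurs exactly twice in $wu$. A sequence $x$ is uniformly recurrent if every $u\in L(x)$ occurs infinitely often in $x$ and for each $u\in L(x)$ there is $K_u$ with $|w|\leq K_u|u|$ for every return word $w$ to $u$; $x$ is linearly recurrent with constant $K$ if it is uniformly recurrent and $|w|\leq K|u|$ for all $u\in L(x)$ and all return words $w$ to $u$. A subshift is linearly recurrent with constant $K$ if it is minimal and contains a linearly recurrent sequence with constant $K$; aperiodic means it contains no periodic point. Cylinders: $[u]=\{x\in X: x_0\cdots x_{|u|-1}=u\}$. For measurable $U\subseteq X$, $\tau(U)=\inf\{k\geq1: S^kU\cap U\neq\emptyset\}$; $\zeta_n=\zeta\vee S^{-1}\zeta\vee\cdots\vee S^{-n+1}\zeta$, $\zeta_n(x)$ is the atom containing $x$, $\underline{\mathcal{R}}_{\zeta}(x)=\liminf_n\tau(\zeta_n(x))/n$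 and $\overline{\mathcal{R}}_{\zeta}(x)=\limsup_n\tau(\zeta_n(x))/n$. *)

theory Defs
  imports "HOL-Analysis.Analysis"
begin

definition shift :: "(int \<Rightarrow> 'a) \<Rightarrow> (int \<Rightarrow> 'a)" where
  "shift x = (\<lambda>n. x (n + 1))"

definition prodtop :: "(int \<Rightarrow> 'a) topology" where
  "prodtop = product_topology (\<lambda>_. discrete_topology UNIV) UNIV"

definition subshift :: "(int \<Rightarrow> 'a) set \<Rightarrow> bool" where
  "subshift X \<longleftrightarrow> closedin prodtop X \<and> shift ` X = X"

definition minimal_subshift :: "(int \<Rightarrow> 'a) set \<Rightarrow> bool" where
  "minimal_subshift X \<longleftrightarrow> subshift X \<and> X \<noteq> {} \<and>
     (\<forall>Y. subshift Y \<and> Y \<subseteq> X \<and> Y \<noteq> {} \<longrightarrow> Y = X)"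

definition aperiodic :: "(int \<Rightarrow> 'a) set \<Rightarrow> bool" where
  "aperiodic X \<longleftrightarrow> (\<forall>x\<in>X. \<forall>p::nat. p \<ge> 1 \<longrightarrow> (shift ^^ p) x \<noteq> x)"

definition occurs_seq :: "(int \<Rightarrow> 'a) \<Rightarrow> 'a list \<Rightarrow> int \<Rightarrow> bool" where
  "occurs_seq x u i \<longleftrightarrow> (\<forall>k<length u. x (i + int k) = u ! k)"

definition lang :: "(int \<Rightarrow> 'a) \<Rightarrow> 'a list set" where
  "lang x = {u. \<exists>i. occurs_seq x u i}"

definition occurs_word :: "'a list \<Rightarrow> 'a list \<Rightarrow> nat \<Rightarrow> bool" where
  "occurs_word v u i \<longleftrightarrow> i + length u \<le> length v \<and> take (length u) (drop i v) = u"

definition return_word :: "(int \<Rightarrow> 'a) \<Rightarrow> 'a list \<Rightarrow> 'a list \<Rightarrow> bool" where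
  "return_word x u w \<longleftrightarrow> w @ u \<in> lang x \<and> take (length u) (w @ u) = u \<and>
     card {i. occurs_word (w @ u) u i} = 2"

definition uniformly_recurrent :: "(int \<Rightarrow> 'a) \<Rightarrow> bool" where
  "uniformly_recurrent x \<longleftrightarrow>
     (\<forall>u\<in>lang x. u \<noteq> [] \<longrightarrow> infinite {i. occurs_seq x u i}) \<and>
     (\<forall>u\<in>lang x. u \<noteq> [] \<longrightarrow>
        (\<exists>Ku::real. \<forall>w. return_word x u w \<longrightarrow> real (length w) \<le> Ku * real (length u)))"

definition linearly_recurrent :: "(int \<Rightarrow> 'a) \<Rightarrow> real \<Rightarrow> bool" where
  "linearly_recurrent x K \<longleftrightarrow> uniformly_recurrent x \<and>
     (\<forall>u\<in>lang x. u \<noteq> [] \<longrightarrow>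
        (\<forall>w. return_word x u w \<longrightarrow> real (length w) \<le> K * real (length u)))"

definition linearly_recurrent_subshift :: "(int \<Rightarrow> 'a) set \<Rightarrow> real \<Rightarrow> bool" where
  "linearly_recurrent_subshift X K \<longleftrightarrow> minimal_subshift X \<and> (\<exists>x\<in>X. linearly_recurrent x K)"

definition cyl :: "(int \<Rightarrow> 'a) set \<Rightarrow> 'a list \<Rightarrow> (int \<Rightarrow> 'a) set" where
  "cyl X u = {x\<in>X. \<forall>k<length u. x (int k) = u ! k}"

definition one_cylinders :: "(int \<Rightarrow> 'a) set \<Rightarrow> (int \<Rightarrow> 'a) set set" where
  "one_cylinders X = {cyl X [a] | a. a \<in> (UNIV :: 'a set)}"

text \<open>The atom of zeta_n = zeta v S^-1 zeta v ... v S^-(n-1) zeta containing x,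
  for a partition P of X.\<close>
definition join_atom :: "(int \<Rightarrow> 'a) set \<Rightarrow> (int \<Rightarrow> 'a) set set \<Rightarrow> nat \<Rightarrow> (int \<Rightarrow> 'a) \<Rightarrow> (int \<Rightarrow> 'a) set" where
  "join_atom X P n x = {y\<in>X. \<forall>k<n. \<forall>U\<in>P. ((shift ^^ k) y \<in> U \<longleftrightarrow> (shift ^^ k) x \<in> U)}"

definition tau :: "(int \<Rightarrow> 'a) set \<Rightarrow> nat" where
  "tau U = Inf {k::nat. k \<ge> 1 \<and> (shift ^^ k) ` U \<inter> U \<noteq> {}}"

definition lower_rec :: "(int \<Rightarrow> 'a) set \<Rightarrow> (int \<Rightarrow> 'a) set set \<Rightarrow> (int \<Rightarrow> 'a) \<Rightarrow> ereal" where
  "lower_rec X P x = liminf (\<lambda>n. ereal (real (tau (join_atom X P n x)) / real n))"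

definition upper_rec :: "(int \<Rightarrow> 'a) set \<Rightarrow> (int \<Rightarrow> 'a) set set \<Rightarrow> (int \<Rightarrow> 'a) \<Rightarrow> ereal" where
  "upper_rec X P x = limsup (\<lambda>n. ereal (real (tau (join_atom X P n x)) / real n))"

end

theory Submission
  imports Defs
begin

lemma shift_pow: "(shift ^^ k) y = (\<lambda>t. y (t + int k))"
  by (induction k) (auto simp: shift_def algebra_simps)

lemma subshift_transl:
  assumes "subshift X" "y \<in> X"
  shows "(\<lambda>t. y (t + i)) \<in> X"
proof -
  have sx: "shift ` X = X" using assms(1) by (simp add: subshift_def)
  have pos: "(\<lambda>t. y (t + int m)) \<in> X" for m
  proof (induction m)
    case 0 then show ?case using assms(2) by simp
  next
    case (Suc m)
    then have "shift (\<lambda>t. y (t + int m)) \<in> X" using sx by blast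
    then show ?case by (simp add: shift_def algebra_simps)
  qed
  have neg: "(\<lambda>t. y (t - int m)) \<in> X" for m
  proof (induction m)
    case 0 then show ?case using assms(2) by simp
  next
    case (Suc m)
    then obtain z where z: "z \<in> X" "shift z = (\<lambda>t. y (t - int m))" using sx by (metis imageE)
    have "z = (\<lambda>t. y (t - int (Suc m)))"
    proof
      fix t
      have "z t = shift z (t - 1)" by (simp add: shift_def)
      also have "\<dots> = y (t - int (Suc m))" using z(2) by (simp add: algebra_simps)
      finally show "z t = y (t - int (Suc m))" .
    qed
    then show ?case using z by simp
  qed
  show ?thesis
  proof (cases "i \<ge> 0")
    case True then show ?thesis using pos[of "nat i"] by simp
  next
    case False then show ?thesis using neg[of "nat (-i)"] by simp
  qed
qed

lemma join_atom_iff: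
  assumes "subshift X" "x \<in> X"
  shows "y \<in> join_atom X (one_cylinders X) n x \<longleftrightarrow> y \<in> X \<and> (\<forall>k<n. y (int k) = x (int k))"
proof -
  have inX: "z \<in> X \<Longrightarrow> (shift ^^ k) z \<in> X" for z k
    using subshift_transl[OF assms(1), of z "int k"] by (simp add: shift_pow)
  have cyl1: "cyl X [a] = {z\<in>X. z 0 = a}" for a by (auto simp: cyl_def)
  show ?thesis
  proof
    assume h: "y \<in> join_atom X (one_cylinders X) n x"
    have "y (int k) = x (int k)" if "k < n" for k
    proof -
      have U: "cyl X [x (int k)] \<in> one_cylinders X" by (auto simp: one_cylinders_def)
      have "(shift ^^ k) x \<in> cyl X [x (int k)]" using inX[OF assms(2)] by (simp add: cyl1 shift_pow)
      then have "(shift ^^ k) y \<in> cyl X [x (int k)]" using h that U by (auto simp: join_atom_def)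
      then show ?thesis by (simp add: cyl1 shift_pow)
    qed
    then show "y \<in> X \<and> (\<forall>k<n. y (int k) = x (int k))" using h by (auto simp: join_atom_def)
  next
    assume h: "y \<in> X \<and> (\<forall>k<n. y (int k) = x (int k))"
    show "y \<in> join_atom X (one_cylinders X) n x"
      using h inX assms(2) by (auto simp: join_atom_def one_cylinders_def cyl1 shift_pow)
  qed
qed

definition seg :: "(int \<Rightarrow> 'a) \<Rightarrow> int \<Rightarrow> nat \<Rightarrow> 'a list" where
  "seg x a l = map (\<lambda>t. x (a + int t)) [0..<l]"

lemma seg_len[simp]: "length (seg x a l) = l" by (simp add: seg_def)
lemma seg_nth[simp]: "k < l \<Longrightarrow> seg x a l ! k = x (a + int k)" by (simp add: seg_def)

lemma occurs_seg: "occurs_seq x (seg x a l) a" by (simp add: occurs_seq_def)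

lemma occurs_word_seg:
  "occurs_word (seg x a l) u i \<longleftrightarrow> i + length u \<le> l \<and> occurs_seq x u (a + int i)"
proof -
  have "take (length u) (drop i (seg x a l)) = u \<longleftrightarrow> occurs_seq x u (a + int i)"
    if "i + length u \<le> l"
    using that by (auto simp: occurs_seq_def list_eq_iff_nth_eq algebra_simps)
  then show ?thesis by (auto simp: occurs_word_def)
qed


lemma gap_lemma:
  assumes lr: "linearly_recurrent x K" and ne: "u \<noteq> []"
    and o1: "occurs_seq x u r" and o2: "occurs_seq x u q" and rq: "r < q"
  shows "\<exists>r'. r < r' \<and> r' \<le> q \<and> occurs_seq x u r' \<and> real_of_int (r' - r) \<le> K * real (length u)"
proof -
  define P where "P d \<longleftrightarrow> d > 0 \<and> occurs_seq x u (r + int d)" for d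
  have Pq: "P (nat (q - r))" using o2 rq by (simp add: P_def)
  define d where "d = (LEAST d. P d)"
  have Pd: "P d" using Pq unfolding d_def by (rule LeastI)
  have dle: "d \<le> nat (q - r)" using Pq unfolding d_def by (rule Least_le)
  have notP: "\<not> occurs_seq x u (r + int i)" if "0 < i" "i < d" for i
    using not_less_Least[of i P] that unfolding d_def[symmetric] by (auto simp: P_def)
  define w where "w = seg x r d"
  have wu: "w @ u = seg x r (d + length u)"
  proof -
    have "seg x r (d + length u) ! k = (w @ u) ! k" if "k < d + length u" for k
    proof (cases "k < d")
      case True then show ?thesis by (simp add: w_def nth_append)
    next
      case False
      have "k - d < length u" using that False by linarith
      then have "u ! (k - d) = x (r + int d + int (k - d))"
        using Pd unfolding P_def occurs_seq_def by auto
      then show ?thesis using False that by (simp add: w_def nth_append algebra_simps)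
    qed
    then show ?thesis by (simp add: list_eq_iff_nth_eq w_def)
  qed
  have "{i. occurs_word (w @ u) u i} = {0, d}"
  proof -
    have "occurs_word (w @ u) u i \<longleftrightarrow> i = 0 \<or> i = d" for i
      unfolding wu occurs_word_seg
      using notP[of i] o1 Pd by (cases "i = 0"; cases "i < d"; auto simp: P_def)
    then show ?thesis by auto
  qed
  moreover have "d > 0" using Pd by (simp add: P_def)
  ultimately have card: "card {i. occurs_word (w @ u) u i} = 2" by simp
  have tk: "take (length u) (w @ u) = u"
  proof -
    have "occurs_word (w @ u) u 0" unfolding wu occurs_word_seg using o1 by simp
    then show ?thesis by (simp add: occurs_word_def)
  qed
  have "w @ u \<in> lang x" unfolding wu lang_def using occurs_seg by blast
  then have rw: "return_word x u w" using tk card by (simp add: return_word_def)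
  have "u \<in> lang x" using o1 by (auto simp: lang_def)
  then have "real (length w) \<le> K * real (length u)"
    using lr rw ne by (auto simp: linearly_recurrent_def)
  then show ?thesis
    using Pd dle rq by (intro exI[of _ "r + int d"]) (auto simp: w_def P_def)
qed

lemma unbounded_above:
  assumes lr: "linearly_recurrent x K" and ne: "u \<noteq> []" and o: "occurs_seq x u i0"
  shows "\<exists>r > N. occurs_seq x u r"
proof (rule ccontr)
  assume "\<not> ?thesis"
  then have noN: "\<And>r. r > N \<Longrightarrow> \<not> occurs_seq x u r" by auto
  have uR: "uniformly_recurrent x" using lr by (simp add: linearly_recurrent_def)
  define S where "S = {r. i0 \<le> r \<and> r \<le> N \<and> occurs_seq x u r}"
  have fS: "finite S" unfolding S_def by (rule finite_subset[of _ "{i0..N}"]) auto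
  have i0N: "i0 \<le> N" using noN[of i0] o by linarith
  have "i0 \<in> S" using o i0N by (simp add: S_def)
  define q where "q = Max S"
  have qS: "q \<in> S" using fS \<open>i0 \<in> S\<close> unfolding q_def using Max_in by blast
  have oq: "occurs_seq x u q" using qS by (simp add: S_def)
  have noq: "\<not> occurs_seq x u t" if "t > q" for t
  proof
    assume ot: "occurs_seq x u t"
    show False
    proof (cases "t \<le> N")
      case True
      then have "t \<in> S" using ot qS that by (auto simp: S_def)
      then show False using fS that unfolding q_def using Max_ge by fastforce
    next
      case False then show False using noN ot by auto
    qed
  qed
  define M where "M = length u + nat \<lceil>K * real (length u)\<rceil>"
  define V where "V = seg x q M"
  have "length V \<noteq> 0" using ne by (simp add: V_def M_def)
  then have Vne: "V \<noteq> []" by auto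
  have VL: "V \<in> lang x" unfolding V_def lang_def using occurs_seg by blast
  have "infinite {i. occurs_seq x V i}" using uR Vne VL by (simp add: uniformly_recurrent_def)
  then have "infinite ({i. occurs_seq x V i} - {q})" by simp
  then have "{i. occurs_seq x V i} - {q} \<noteq> {}" by (rule infinite_imp_nonempty)
  then obtain r where orV: "occurs_seq x V r" and rq: "r \<noteq> q" by blast
  have Vu: "occurs_seq x u r"
    using orV oq unfolding occurs_seq_def V_def M_def by auto
  have "r \<le> q" using noq[of r] Vu by linarith
  with rq have "r < q" by simp
  from gap_lemma[OF lr ne Vu oq this] obtain r' where
    r': "r < r'" "r' \<le> q" "occurs_seq x u r'" "real_of_int (r' - r) \<le> K * real (length u)" by blast
  have dle: "nat (r' - r) + length u \<le> M"
    using r'(4) r'(1) unfolding M_def by linarith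
  have "occurs_seq x u (q + (r' - r))"
    unfolding occurs_seq_def
  proof (intro allI impI)
    fix k assume k: "k < length u"
    define j where "j = nat (r' - r) + k"
    have j: "j < M" using dle k by (simp add: j_def)
    have e1: "r + int j = r' + int k" using r'(1) by (simp add: j_def)
    have e2: "q + int j = q + (r' - r) + int k" using r'(1) by (simp add: j_def)
    have "u ! k = x (r' + int k)" using r'(3) k by (simp add: occurs_seq_def)
    also have "\<dots> = x (r + int j)" using e1 by simp
    also have "\<dots> = V ! j" using orV j by (simp add: occurs_seq_def V_def)
    also have "\<dots> = x (q + int j)" using j by (simp add: V_def)
    finally show "x (q + (r' - r) + int k) = u ! k" using e2 by simp
  qed
  then show False using noq r'(1) by simp
qed


lemma lang_shift: "lang (shift y) = lang y"
proof -
  have "occurs_seq (shift y) u i \<longleftrightarrow> occurs_seq y u (i + 1)" for u i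
    by (simp add: occurs_seq_def shift_def algebra_simps)
  then show ?thesis unfolding lang_def
    by (auto, metis diff_add_cancel)
qed

lemma closed_lang_sub: "closedin prodtop {y::int \<Rightarrow> 'a. lang y \<subseteq> L}"
proof -
  have top: "topspace (prodtop :: (int \<Rightarrow> 'a) topology) = UNIV"
    by (simp add: prodtop_def PiE_UNIV_domain)
  have "openin prodtop (UNIV - {y::int \<Rightarrow> 'a. lang y \<subseteq> L})"
  proof (subst openin_subopen, intro ballI)
    fix y :: "int \<Rightarrow> 'a" assume "y \<in> UNIV - {y. lang y \<subseteq> L}"
    then obtain u where uy: "u \<in> lang y" and uL: "u \<notin> L" by auto
    then obtain i where oi: "occurs_seq y u i" by (auto simp: lang_def)
    define F where "F = (\<lambda>j. if j \<in> {i..<i + int (length u)} then {y j} else (UNIV :: 'a set))"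
    define T where "T = (\<Pi>\<^sub>E j\<in>UNIV. F j)"
    have "openin prodtop T" unfolding prodtop_def T_def
    proof (rule product_topology_basis)
      show "openin (discrete_topology UNIV) (F j)" for j by simp
      show "finite {j. F j \<noteq> topspace (discrete_topology UNIV)}"
        by (rule finite_subset[of _ "{i..<i + int (length u)}"]) (auto simp: F_def)
    qed
    moreover have "y \<in> T" by (simp add: T_def F_def PiE_UNIV_domain)
    moreover have "T \<subseteq> UNIV - {y. lang y \<subseteq> L}"
    proof
      fix z assume "z \<in> T"
      then have "\<forall>j\<in>{i..<i + int (length u)}. z j = y j"
        by (auto simp: T_def F_def PiE_UNIV_domain Pi_iff split: if_splits)
      then have "occurs_seq z u i" using oi by (auto simp: occurs_seq_def)
      then have "u \<in> lang z" by (auto simp: lang_def)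
      then show "z \<in> UNIV - {y. lang y \<subseteq> L}" using uL by auto
    qed
    ultimately show "\<exists>T. openin prodtop T \<and> y \<in> T \<and> T \<subseteq> UNIV - {y. lang y \<subseteq> L}" by blast
  qed
  then show ?thesis by (simp add: closedin_def top)
qed

lemma minimal_lang:
  assumes "minimal_subshift X" "x0 \<in> X" "y \<in> X"
  shows "lang y \<subseteq> lang x0"
proof -
  define Y where "Y = X \<inter> {y. lang y \<subseteq> lang x0}"
  have sX: "subshift X" and sx: "shift ` X = X" and cX: "closedin prodtop X"
    using assms(1) by (auto simp: minimal_subshift_def subshift_def)
  have "closedin prodtop Y" unfolding Y_def using cX closed_lang_sub by (rule closedin_Int)
  moreover have "shift ` Y = Y"
  proof
    show "shift ` Y \<subseteq> Y" using sx by (auto simp: Y_def lang_shift)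
    show "Y \<subseteq> shift ` Y"
    proof
      fix z assume z: "z \<in> Y"
      then obtain w where "w \<in> X" "z = shift w" using sx by (auto simp: Y_def)
      then show "z \<in> shift ` Y" using z by (auto simp: Y_def lang_shift)
    qed
  qed
  ultimately have "subshift Y" by (simp add: subshift_def)
  moreover have "Y \<subseteq> X" "Y \<noteq> {}" using assms(2) by (auto simp: Y_def)
  ultimately have "Y = X" using assms(1) by (auto simp: minimal_subshift_def)
  then show ?thesis using assms(3) by (auto simp: Y_def)
qed


lemma tau_upper:
  assumes lrs: "linearly_recurrent_subshift X K" and xX: "x \<in> X" and n: "n \<ge> 1"
  defines "J \<equiv> join_atom X (one_cylinders X) n x"
  shows "{k::nat. k \<ge> 1 \<and> (shift ^^ k) ` J \<inter> J \<noteq> {}} \<noteq> {} \<and> real (tau J) \<le> K * real n"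
proof -
  obtain x0 where x0X: "x0 \<in> X" and lr: "linearly_recurrent x0 K"
    using lrs by (auto simp: linearly_recurrent_subshift_def)
  have mX: "minimal_subshift X" using lrs by (simp add: linearly_recurrent_subshift_def)
  then have sX: "subshift X" by (simp add: minimal_subshift_def)
  define u where "u = seg x 0 n"
  have une: "u \<noteq> []" using n by (auto simp: u_def simp flip: length_0_conv)
  have "u \<in> lang x" unfolding u_def lang_def using occurs_seg by blast
  then have "u \<in> lang x0" using minimal_lang[OF mX x0X xX] by auto
  then obtain i where oi: "occurs_seq x0 u i" by (auto simp: lang_def)
  obtain q where "q > i" "occurs_seq x0 u q" using unbounded_above[OF lr une oi] by blast
  from gap_lemma[OF lr une oi this(2) this(1)] obtain r' where
    r': "i < r'" "occurs_seq x0 u r'" "real_of_int (r' - i) \<le> K * real (length u)" by blast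
  define y where "y = (\<lambda>t. x0 (t + i))"
  define m where "m = nat (r' - i)"
  have yX: "y \<in> X" unfolding y_def using subshift_transl[OF sX x0X] .
  have yJ: "y \<in> J" unfolding J_def join_atom_iff[OF sX xX]
    using yX oi by (auto simp: y_def u_def occurs_seq_def algebra_simps)
  have sy: "(shift ^^ m) y = (\<lambda>t. x0 (t + r'))" using r'(1) by (simp add: shift_pow y_def m_def algebra_simps)
  have syJ: "(shift ^^ m) y \<in> J" unfolding J_def join_atom_iff[OF sX xX] sy
    using r'(2) subshift_transl[OF sX x0X, of r'] by (auto simp: u_def occurs_seq_def algebra_simps)
  have m1: "m \<ge> 1" using r'(1) by (simp add: m_def)
  have mem: "m \<in> {k::nat. k \<ge> 1 \<and> (shift ^^ k) ` J \<inter> J \<noteq> {}}" using m1 yJ syJ by blast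
  have "tau J \<le> m" unfolding tau_def by (rule cInf_lower[OF mem]) simp
  moreover have "real m \<le> K * real n" using r' by (simp add: m_def u_def)
  ultimately have "real (tau J) \<le> K * real n" by (meson of_nat_le_iff order_trans)
  then show ?thesis using mem by blast
qed


lemma tau_lower:
  assumes lrs: "linearly_recurrent_subshift X K" and ap: "aperiodic X" and xX: "x \<in> X" and n: "n \<ge> 1"
  defines "J \<equiv> join_atom X (one_cylinders X) n x"
  shows "real (n + 1) \<le> K * real (tau J + 1)"
proof -
  obtain x0 where x0X: "x0 \<in> X" and lr: "linearly_recurrent x0 K"
    using lrs by (auto simp: linearly_recurrent_subshift_def)
  have mX: "minimal_subshift X" using lrs by (simp add: linearly_recurrent_subshift_def)
  then have sX: "subshift X" by (simp add: minimal_subshift_def)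
  define k where "k = tau J"
  have ne: "{k::nat. k \<ge> 1 \<and> (shift ^^ k) ` J \<inter> J \<noteq> {}} \<noteq> {}"
    using tau_upper[OF lrs xX n] unfolding J_def by blast
  then have "k \<in> {k::nat. k \<ge> 1 \<and> (shift ^^ k) ` J \<inter> J \<noteq> {}}"
    unfolding k_def tau_def by (rule Inf_nat_def1)
  then obtain y where k1: "k \<ge> 1" and yJ: "y \<in> J" and syJ: "(shift ^^ k) y \<in> J" by blast
  have yX: "y \<in> X" and yx: "\<And>j. j < n \<Longrightarrow> y (int j) = x (int j)"
    using yJ unfolding J_def join_atom_iff[OF sX xX] by auto
  have ykx: "\<And>j. j < n \<Longrightarrow> y (int j + int k) = x (int j)"
    using syJ unfolding J_def join_atom_iff[OF sX xX] by (auto simp: shift_pow)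
  define v where "v = seg y 0 (n + k)"
  have vne: "v \<noteq> []" using n by (auto simp: v_def simp flip: length_0_conv)
  have "v \<in> lang y" unfolding v_def lang_def using occurs_seg by blast
  then have "v \<in> lang x0" using minimal_lang[OF mX x0X yX] by auto
  then obtain i0 where oi0: "occurs_seq x0 v i0" by (auto simp: lang_def)
  have "(shift ^^ k) x0 \<noteq> x0" using ap x0X k1 by (simp add: aperiodic_def)
  then obtain b where b: "x0 (b + int k) \<noteq> x0 b" by (auto simp: shift_pow)
  obtain r where rb: "r > b" and orv: "occurs_seq x0 v r" using unbounded_above[OF lr vne oi0] by blast
  have per: "x0 (r + int t) = x0 (r + int t + int k)" if "t < n" for t
  proof -
    have "x0 (r + int t) = v ! t" using orv that by (simp add: occurs_seq_def v_def)
    also have "\<dots> = x (int t)" using that yx by (simp add: v_def)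
    also have "\<dots> = v ! (t + k)" using that ykx by (simp add: v_def)
    also have "\<dots> = x0 (r + int (t + k))" using orv that unfolding occurs_seq_def v_def
      by (metis add_less_cancel_right seg_len)
    finally show ?thesis by (simp add: algebra_simps)
  qed
  define B where "B = {j. b \<le> j \<and> j < r \<and> x0 j \<noteq> x0 (j + int k)}"
  have fB: "finite B" unfolding B_def by (rule finite_subset[of _ "{b..<r}"]) auto
  have bB: "b \<in> B" using b rb by (auto simp: B_def)
  define j1 where "j1 = Max B"
  have j1B: "j1 \<in> B" using fB bB unfolding j1_def using Max_in by blast
  have nobreak: "x0 j = x0 (j + int k)" if "j1 < j" "j < r + int n" for j
  proof (cases "j < r")
    case True
    have "b \<le> j" using j1B that by (auto simp: B_def)
    show ?thesis
    proof (rule ccontr)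
      assume "x0 j \<noteq> x0 (j + int k)"
      then have "j \<in> B" using True \<open>b \<le> j\<close> by (auto simp: B_def)
      then show False using fB that(1) unfolding j1_def using Max_ge by fastforce
    qed
  next
    case False
    then have "j = r + int (nat (j - r))" "nat (j - r) < n" using that by auto
    then show ?thesis using per[of "nat (j - r)"] by metis
  qed
  define s where "s = seg x0 j1 (k + 1)"
  have sne: "s \<noteq> []" by (simp add: s_def flip: length_0_conv)
  have os: "occurs_seq x0 s j1" unfolding s_def by (rule occurs_seg)
  obtain q where "q > j1" "occurs_seq x0 s q" using unbounded_above[OF lr sne os] by blast
  from gap_lemma[OF lr sne os this(2) this(1)] obtain r' where
    r': "j1 < r'" "occurs_seq x0 s r'" "real_of_int (r' - j1) \<le> K * real (length s)" by blast
  have "x0 r' = x0 j1" using r'(2) by (auto simp: occurs_seq_def s_def)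
  moreover have "x0 (r' + int k) = x0 (j1 + int k)" using r'(2) unfolding occurs_seq_def s_def
    by (metis less_add_one seg_nth seg_len)
  moreover have "x0 j1 \<noteq> x0 (j1 + int k)" using j1B by (simp add: B_def)
  ultimately have "x0 r' \<noteq> x0 (r' + int k)" by simp
  then have "r' \<ge> r + int n" using nobreak[OF r'(1)] by force
  moreover have "j1 < r" using j1B by (simp add: B_def)
  ultimately have "real (n + 1) \<le> real_of_int (r' - j1)" by linarith
  also have "\<dots> \<le> K * real (k + 1)" using r'(3) by (simp add: s_def)
  finally show ?thesis by (simp add: k_def)
qed


theorem proposition2p2:
  fixes X :: "(int \<Rightarrow> 'a::finite) set" and K :: real
  assumes "linearly_recurrent_subshift X K"
    and "aperiodic X"
    and "x \<in> X"
  shows "ereal (1 / K) \<le> lower_rec X (one_cylinders X) x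
       \<and> lower_rec X (one_cylinders X) x \<le> upper_rec X (one_cylinders X) x
       \<and> upper_rec X (one_cylinders X) x \<le> ereal K"
proof -
  define f where "f n = real (tau (join_atom X (one_cylinders X) n x))" for n
  have up: "f n \<le> K * real n" if "n \<ge> 1" for n
    using tau_upper[OF assms(1,3) that] by (simp add: f_def)
  have lo: "real (n + 1) \<le> K * (f n + 1)" if "n \<ge> 1" for n
    using tau_lower[OF assms that] by (simp add: f_def add.commute)
  have f1: "f 1 \<ge> 1"
  proof -
    have "tau (join_atom X (one_cylinders X) 1 x) \<in>
        {k::nat. k \<ge> 1 \<and> (shift ^^ k) ` (join_atom X (one_cylinders X) 1 x) \<inter> (join_atom X (one_cylinders X) 1 x) \<noteq> {}}"
      unfolding tau_def by (rule Inf_nat_def1) (use tau_upper[OF assms(1,3), of 1] in simp)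
    then show ?thesis by (simp add: f_def)
  qed
  have Kpos: "K > 0" using up[of 1] f1 by simp
  have ev_up: "eventually (\<lambda>n. ereal (f n / real n) \<le> ereal K) sequentially"
    using eventually_ge_at_top[of 1]
    by eventually_elim (use up in \<open>auto simp: divide_le_eq\<close>)
  have ev_lo: "eventually (\<lambda>n. ereal (1 / K - 1 / real n) \<le> ereal (f n / real n)) sequentially"
    using eventually_ge_at_top[of 1]
  proof eventually_elim
    case (elim n)
    have npos: "real n > 0" using elim by simp
    have "real n + 1 \<le> K * (f n + 1)" using lo[OF elim] by simp
    then have h: "real n - K \<le> K * f n" by (simp add: algebra_simps)
    have eq1: "1 / K - 1 / real n = (real n - K) / (K * real n)" using Kpos npos by (simp add: field_simps)
    have eq2: "f n / real n = (K * f n) / (K * real n)" using Kpos npos by simp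
    have "1 / K - 1 / real n \<le> f n / real n"
      unfolding eq1 eq2 by (rule divide_right_mono[OF h]) (use Kpos npos in simp)
    then show ?case using npos by simp
  qed
  have lim: "(\<lambda>n. ereal (1 / K - 1 / real n)) \<longlonglongrightarrow> ereal (1 / K)"
  proof (subst lim_ereal)
    have "(\<lambda>n. 1 / K - 1 / real n) \<longlonglongrightarrow> 1 / K - 0"
      by (intro tendsto_diff tendsto_const lim_1_over_n)
    then show "(\<lambda>n. 1 / K - 1 / real n) \<longlonglongrightarrow> 1 / K" by simp
  qed
  have "ereal (1/K) = liminf (\<lambda>n. ereal (1 / K - 1 / real n))"
    using lim_imp_Liminf[OF trivial_limit_sequentially lim] by simp
  also have "\<dots> \<le> lower_rec X (one_cylinders X) x"
    unfolding lower_rec_def f_def[symmetric] by (rule Liminf_mono[OF ev_lo])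
  finally have A: "ereal (1/K) \<le> lower_rec X (one_cylinders X) x" .
  have B: "lower_rec X (one_cylinders X) x \<le> upper_rec X (one_cylinders X) x"
    unfolding lower_rec_def upper_rec_def by (rule Liminf_le_Limsup) simp
  have C: "upper_rec X (one_cylinders X) x \<le> ereal K"
    unfolding upper_rec_def f_def[symmetric] by (rule Limsup_bounded[OF ev_up])
  show ?thesis using A B C by simp
qed

end
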